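(* Suppose that $(\tilde{u},\tilde{v})\in\mathbb{R}^2$ and $c>0$, and set \[ u_c = \frac{\tilde{u}}{c},\qquad v_c = \frac{2\ln c+\tilde{v}}{c}. \] Then as $c\to+\infty$ the catenoids $\mathfrak{C}_c$ (parametrized by $X_c$) satisfy \[ \lim_{c\to+\infty} X_c(u_c+iv_c) = \left(-\frac{1}{2\lambda_1}\cos\tilde{u}\,e^{\tilde{v}},\; -\frac{1}{2\lambda_2}\sin\tilde{u}\,e^{\tilde{v}},\; 0\right). \]
   Context: Setting: $\widetilde{E(2)}$ is $\mathbb{R}^3$ with the group law $(x_1,y_1,z_1)*(x_2,y_2,z_2)=(x_1+x_2\cos z_1-y_2\sin z_1,\ y_1+x_2\sin z_1+y_2\cos z_1,\ z_1+z_2)$ and the left-invariant metric $g(\lambda_1,\lambda_2)=\lambda_1^2(\cos z\,dx+\sin z\,dy)^2+\lambda_2^2(-\sin z\,dx+\cos z\,dy)^2+\frac{1}{\lambda_1^2\lambda_2^2}dz^2$, where either $\lambda_1>\lambda_2>0$ or $\lambda_1=\lambda_2=1$. Write coordinates as $(x_1,x_2,x_3)$. Construction of the catenoid $\mathfrak{C}_c$: For $c>0$ and a real $\theta$, put $\theta_c^+=\pi$ if $c>\sqrt2\lambda_1$ and $\theta_c^+=\arccos(1-c^2/\lambda_1^2)$ if $0<c\le\sqrt2\lambda_1$, and take $\theta\in(-\theta_c^+,\theta_c^+)$. Let $\varphi$ solve $\varphi'(u)=\sqrt{c^2+2\cos\theta\, B-D^2B^2}$, $\varphi(0)=0$, where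 $B=\lambda_1^2\cos^2\varphi(u)+\lambda_2^2\sin^2\varphi(u)$ and $D=\sin\theta/c$; let $f$ solve $f'(u)=DB$, $f(0)=0$; let $A=f(u)+cv$; let $G(u)=\int_0^u\frac{c-\varphi'(s)}{B}\,ds$; let $U>0$ be such that $\varphi(U)=\pi$, and let $H(c,\theta)=Df(U)+cG(U)$. It is known that for each $c>0$ there is a unique $\widetilde{\theta_c}\in(0,\pi/2)\cap(0,\theta_c^+)$ with $H(c,\widetilde{\theta_c})=0$, and that $\widetilde{\theta_c}\to\pi/2$ as $c\to+\infty$. The catenoid $\mathfrak{C}_c$ is the image of the conformal minimal immersion $X_c=(x_1,x_2,x_3):\mathbb{C}\to\widetilde{E(2)}$, $z=u+iv$, obtained with $\theta=\widetilde{\theta_c}$ (all of $\varphi,f,B,D,A,G,U$ then depend on $c$), given by $x_3(u+iv)=-\lambda_1\lambda_2Dv+\lambda_1\lambda_2G(u)$, $x_1=-\frac{1}{(c^2+\lambda_1^2\lambda_2^2D^2)B}\Big[\frac{1}{\lambda_1}f'\cos\varphi\,M_1-\frac{1}{\lambda_1}(c-\varphi')\sin\varphi\,M_2-\frac{1}{\lambda_2}(c-\varphi')\cos\varphi\,M_3-\frac{1}{\lambda_2}f'\sin\varphi\,M_4\Big]$, $x_2=-\frac{1}{(c^2+\lambda_1^2\lambda_2^2D^2)B}\Big[\frac{1}{\lambda_1}f'\cos\varphi\,M_4-\frac{1}{\lambda_1}(c-\varphi')\sin\varphi\,M_3+\frac{1}{\lambda_2}(c-\varphi')\cos\varphi\,M_2+\frac{1}{\lambda_2}f'\sin\varphi\,M_1\Big]$,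 where $M_1=c\cos x_3\cosh A-\lambda_1\lambda_2D\sin x_3\sinh A$, $M_2=c\cos x_3\sinh A-\lambda_1\lambda_2D\sin x_3\cosh A$, $M_3=c\sin x_3\sinh A+\lambda_1\lambda_2D\cos x_3\cosh A$, $M_4=c\sin x_3\cosh A+\lambda_1\lambda_2D\cos x_3\sinh A$, and $\varphi,\varphi',f'$ are evaluated at $u$. Its Gauss map is $g(u+iv)=e^{f(u)+cv}e^{i\varphi(u)}$. *)

theory Defs
  imports "HOL-Analysis.Analysis"
begin

text \<open>Setting: left-invariant metric g(lambda1,lambda2) on the universal cover of E(2).\<close>

definition admissible_lambdas :: "real \<Rightarrow> real \<Rightarrow> bool" where
  "admissible_lambdas l1 l2 \<longleftrightarrow> (l1 > l2 \<and> l2 > 0) \<or> (l1 = 1 \<and> l2 = 1)"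

definition theta_plus :: "real \<Rightarrow> real \<Rightarrow> real" where
  "theta_plus l1 c = (if c > sqrt 2 * l1 then pi else arccos (1 - c\<^sup>2 / l1\<^sup>2))"

definition Bfun :: "real \<Rightarrow> real \<Rightarrow> real \<Rightarrow> real" where
  "Bfun l1 l2 p = l1\<^sup>2 * (cos p)\<^sup>2 + l2\<^sup>2 * (sin p)\<^sup>2"

definition Dconst :: "real \<Rightarrow> real \<Rightarrow> real" where
  "Dconst c \<theta> = sin \<theta> / c"

definition sint :: "real \<Rightarrow> real \<Rightarrow> (real \<Rightarrow> real) \<Rightarrow> real" where
  "sint a b g = (if a \<le> b then integral {a..b} g else - integral {b..a} g)"

definition Gfun :: "real \<Rightarrow> real \<Rightarrow> real \<Rightarrow> (real \<Rightarrow> real) \<Rightarrow> real \<Rightarrow> real" where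
  "Gfun l1 l2 c \<phi> u = sint 0 u (\<lambda>s. (c - deriv \<phi> s) / Bfun l1 l2 (\<phi> s))"

definition Hfun :: "real \<Rightarrow> real \<Rightarrow> real \<Rightarrow> real \<Rightarrow> (real \<Rightarrow> real) \<Rightarrow> (real \<Rightarrow> real) \<Rightarrow> real \<Rightarrow> real" where
  "Hfun l1 l2 c \<theta> \<phi> f U = Dconst c \<theta> * f U + c * Gfun l1 l2 c \<phi> U"

definition catX :: "real \<Rightarrow> real \<Rightarrow> real \<Rightarrow> real \<Rightarrow> (real \<Rightarrow> real) \<Rightarrow> (real \<Rightarrow> real)
    \<Rightarrow> real \<Rightarrow> real \<Rightarrow> real \<times> real \<times> real" where
  "catX l1 l2 c \<theta> \<phi> f u v =
    (let D = Dconst c \<theta>; B = Bfun l1 l2 (\<phi> u); p = \<phi> u; dp = deriv \<phi> u; df = deriv f u;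
         A = f u + c * v;
         x3 = - l1 * l2 * D * v + l1 * l2 * Gfun l1 l2 c \<phi> u;
         M1 = c * cos x3 * cosh A - l1 * l2 * D * sin x3 * sinh A;
         M2 = c * cos x3 * sinh A - l1 * l2 * D * sin x3 * cosh A;
         M3 = c * sin x3 * sinh A + l1 * l2 * D * cos x3 * cosh A;
         M4 = c * sin x3 * cosh A + l1 * l2 * D * cos x3 * sinh A;
         K = - 1 / ((c\<^sup>2 + l1\<^sup>2 * l2\<^sup>2 * D\<^sup>2) * B);
         x1 = K * (1 / l1 * df * cos p * M1 - 1 / l1 * (c - dp) * sin p * M2
                   - 1 / l2 * (c - dp) * cos p * M3 - 1 / l2 * df * sin p * M4);
         x2 = K * (1 / l1 * df * cos p * M4 - 1 / l1 * (c - dp) * sin p * M3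
                   + 1 / l2 * (c - dp) * cos p * M2 + 1 / l2 * df * sin p * M1)
     in (x1, x2, x3))"

end

theory Submission
  imports Defs "HOL-Real_Asymp.Real_Asymp"
begin

lemma mvt_bound:
  fixes F F' :: "real \<Rightarrow> real"
  assumes d: "\<And>x. (F has_real_derivative F' x) (at x)" and b: "\<And>x. \<bar>F' x - a\<bar> \<le> M"
  shows "\<bar>F u - F 0 - a * u\<bar> \<le> M * \<bar>u\<bar>"
proof (cases "u = 0")
  case True then show ?thesis by simp
next
  case False
  show ?thesis
  proof (cases "u > 0")
    case True
    obtain z where "F u - F 0 = (u - 0) * F' z" using MVT2[OF True d] by blast
    then have "F u - F 0 - a * u = u * (F' z - a)" by (simp add: algebra_simps)
    then show ?thesis using b[of z] True by (simp add: abs_mult mult.commute)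
  next
    case False
    then have "u < 0" using \<open>u \<noteq> 0\<close> by simp
    obtain z where "F 0 - F u = (0 - u) * F' z" using MVT2[OF \<open>u < 0\<close> d] by blast
    then have "F u - F 0 - a * u = u * (F' z - a)" by (simp add: algebra_simps)
    then show ?thesis using mult_left_mono[OF b[of z] abs_ge_zero[of u]] by (simp add: abs_mult mult.commute)
  qed
qed

lemma sint_bound:
  assumes c: "continuous_on UNIV g" and b: "\<And>s. \<bar>g s\<bar> \<le> M"
  shows "\<bar>sint 0 u g\<bar> \<le> M * \<bar>u\<bar>"
proof (cases "0 \<le> u")
  case True
  have "norm (integral {0..u} g) \<le> M * (u - 0)"
    by (rule integral_bound[OF True continuous_on_subset[OF c]]) (use b in auto)
  then show ?thesis using True by (simp add: sint_def)
next
  case False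
  have "norm (integral {u..0} g) \<le> M * (0 - u)"
    by (rule integral_bound[OF _ continuous_on_subset[OF c]]) (use b False in auto)
  then show ?thesis using False by (simp add: sint_def)
qed

lemma tendsto_bound:
  fixes F :: "'a \<Rightarrow> real"
  assumes "eventually (\<lambda>x. \<bar>F x - L\<bar> \<le> e x) G" "(e \<longlongrightarrow> 0) G"
  shows "(F \<longlongrightarrow> L) G"
proof -
  have "((\<lambda>x. F x - L) \<longlongrightarrow> 0) G"
    by (rule Lim_null_comparison[OF _ assms(2)]) (use assms(1) in simp)
  then show ?thesis by (rule LIM_zero_cancel)
qed

lemma sqrt_dev:
  fixes c X :: real
  assumes "c > 0" "0 \<le> X"
  shows "c - sqrt X = (c\<^sup>2 - X) / (c + sqrt X)" "c * \<bar>c - sqrt X\<bar> \<le> \<bar>c\<^sup>2 - X\<bar>"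
proof -
  have p: "c + sqrt X > 0" using assms by (simp add: add_pos_nonneg)
  have "(c - sqrt X) * (c + sqrt X) = c\<^sup>2 - X" using assms by (simp add: algebra_simps power2_eq_square)
  then show e: "c - sqrt X = (c\<^sup>2 - X) / (c + sqrt X)" using p by (simp add: field_simps)
  have "\<bar>c\<^sup>2 - X\<bar> = \<bar>c - sqrt X\<bar> * (c + sqrt X)"
    using \<open>(c - sqrt X) * (c + sqrt X) = c\<^sup>2 - X\<close> p by (metis abs_mult abs_of_pos)
  also have "\<dots> \<ge> \<bar>c - sqrt X\<bar> * c" using assms by (intro mult_left_mono) auto
  finally show "c * \<bar>c - sqrt X\<bar> \<le> \<bar>c\<^sup>2 - X\<bar>" by (simp add: mult.commute)
qed

lemma div_le_neg:
  fixes N N' d e :: real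
  assumes "N \<le> N'" "N' < 0" "0 < d" "d \<le> e"
  shows "N / d \<le> N' / e"
proof -
  have "N / d \<le> N' / d" using assms by (simp add: divide_right_mono)
  also have "\<dots> \<le> N' / e" using assms by (simp add: divide_left_mono_neg mult_pos_pos)
  finally show ?thesis .
qed

theorem proposition6p1:
  fixes l1 l2 ut vt :: real
    and \<theta> :: "real \<Rightarrow> real"          \<comment> \<open>c \<mapsto> theta~_c\<close>
    and \<phi> f :: "real \<Rightarrow> real \<Rightarrow> real"   \<comment> \<open>c \<mapsto> phi, f (for theta = theta~_c)\<close>
    and U :: "real \<Rightarrow> real"
  assumes lam: "admissible_lambdas l1 l2"
    and theta_range: "\<And>c. c > 0 \<Longrightarrow> 0 < \<theta> c \<and> \<theta> c < pi / 2 \<and> \<theta> c < theta_plus l1 c"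
    and phi_ode: "\<And>c u. c > 0 \<Longrightarrow>
        (\<phi> c has_real_derivative
           sqrt (c\<^sup>2 + 2 * cos (\<theta> c) * Bfun l1 l2 (\<phi> c u)
                 - (Dconst c (\<theta> c))\<^sup>2 * (Bfun l1 l2 (\<phi> c u))\<^sup>2)) (at u)"
    and phi0: "\<And>c. c > 0 \<Longrightarrow> \<phi> c 0 = 0"
    and f_ode: "\<And>c u. c > 0 \<Longrightarrow>
        (f c has_real_derivative Dconst c (\<theta> c) * Bfun l1 l2 (\<phi> c u)) (at u)"
    and f0: "\<And>c. c > 0 \<Longrightarrow> f c 0 = 0"
    and U_pos: "\<And>c. c > 0 \<Longrightarrow> U c > 0 \<and> \<phi> c (U c) = pi"
    and H_zero: "\<And>c. c > 0 \<Longrightarrow> Hfun l1 l2 c (\<theta> c) (\<phi> c) (f c) (U c) = 0"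
  shows "((\<lambda>c. catX l1 l2 c (\<theta> c) (\<phi> c) (f c) (ut / c) ((2 * ln c + vt) / c))
           \<longlongrightarrow> (- 1 / (2 * l1) * cos ut * exp vt, - 1 / (2 * l2) * sin ut * exp vt, 0)) at_top"
proof -
  have l2p: "0 < l2" and l21: "l2 \<le> l1" using lam unfolding admissible_lambdas_def by auto
  have l1p: "0 < l1" using l2p l21 by simp
  have l22: "l2\<^sup>2 \<le> l1\<^sup>2" using l2p l21 by (simp add: power_mono)
  have Blo: "l2\<^sup>2 \<le> Bfun l1 l2 p" for p
  proof -
    have "0 \<le> (l1\<^sup>2 - l2\<^sup>2) * (cos p)\<^sup>2" using l22 by simp
    then show ?thesis unfolding Bfun_def sin_squared_eq by (simp add: algebra_simps)
  qed
  have Bhi: "Bfun l1 l2 p \<le> l1\<^sup>2" for p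
  proof -
    have "0 \<le> (l1\<^sup>2 - l2\<^sup>2) * (sin p)\<^sup>2" using l22 by simp
    then show ?thesis unfolding Bfun_def cos_squared_eq by (simp add: algebra_simps)
  qed
  have Bpos: "0 < Bfun l1 l2 p" for p using Blo[of p] l2p by (smt (verit) zero_less_power)
  have Bne: "Bfun l1 l2 p \<noteq> 0" for p using Bpos[of p] by simp
  define D where "D c = Dconst c (\<theta> c)" for c
  define X where "X c s = c\<^sup>2 + 2 * cos (\<theta> c) * Bfun l1 l2 (\<phi> c s) - (D c)\<^sup>2 * (Bfun l1 l2 (\<phi> c s))\<^sup>2" for c s
  have sinpos: "0 < sin (\<theta> c)" if "c > 0" for c
    using theta_range[OF that] by (intro sin_gt_zero) auto
  have cospos: "0 < cos (\<theta> c)" if "c > 0" for c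
    using theta_range[OF that] by (intro cos_gt_zero_pi) auto
  have Dpos: "0 < D c" if "c > 0" for c using sinpos[OF that] that by (simp add: D_def Dconst_def)
  have Dle: "D c \<le> 1 / c" if "c > 0" for c using that by (simp add: D_def Dconst_def divide_right_mono)
  have phid: "(\<phi> c has_real_derivative sqrt (X c s)) (at s)" if "c > 0" for c s
    using phi_ode[OF that] unfolding X_def D_def by simp
  have dphi: "deriv (\<phi> c) s = sqrt (X c s)" if "c > 0" for c s
    using DERIV_imp_deriv[OF phid[OF that]] .
  have fd: "(f c has_real_derivative D c * Bfun l1 l2 (\<phi> c s)) (at s)" if "c > 0" for c s
    using f_ode[OF that] unfolding D_def by simp
  have dfe: "deriv (f c) s = D c * Bfun l1 l2 (\<phi> c s)" if "c > 0" for c s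
    using DERIV_imp_deriv[OF fd[OF that]] .
  have DB: "0 \<le> D c * Bfun l1 l2 (\<phi> c s)" "D c * Bfun l1 l2 (\<phi> c s) \<le> c" if "c \<ge> l1" for c s
  proof -
    have c0: "c > 0" using that l1p by simp
    show "0 \<le> D c * Bfun l1 l2 (\<phi> c s)" using Dpos[OF c0] Bpos[of "\<phi> c s"] by simp
    have "D c * Bfun l1 l2 (\<phi> c s) \<le> (1 / c) * l1\<^sup>2"
      using c0 Dpos[OF c0] Dle[OF c0] Bhi[of "\<phi> c s"] Bpos[of "\<phi> c s"] by (intro mult_mono) auto
    also have "\<dots> \<le> c" using c0 that l1p by (simp add: field_simps power2_eq_square mult_mono)
    finally show "D c * Bfun l1 l2 (\<phi> c s) \<le> c" .
  qed
  have Xnn: "0 \<le> X c s" if "c \<ge> l1" for c s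
  proof -
    have c0: "c > 0" using that l1p by simp
    have "(D c * Bfun l1 l2 (\<phi> c s))\<^sup>2 \<le> c\<^sup>2" using DB[OF that, of s] by (intro power_mono) auto
    moreover have "0 \<le> cos (\<theta> c) * Bfun l1 l2 (\<phi> c s)" using cospos[OF c0] Bpos[of "\<phi> c s"] by simp
    ultimately show ?thesis unfolding X_def by (simp add: power_mult_distrib)
  qed
  have Xup: "X c s \<le> 4 * c\<^sup>2" if "c \<ge> l1" for c s
  proof -
    have c0: "c > 0" using that l1p by simp
    have "cos (\<theta> c) * Bfun l1 l2 (\<phi> c s) \<le> 1 * l1\<^sup>2"
      using cospos[OF c0] Bhi[of "\<phi> c s"] Bpos[of "\<phi> c s"] by (intro mult_mono) auto
    then have "2 * cos (\<theta> c) * Bfun l1 l2 (\<phi> c s) \<le> 2 * l1\<^sup>2" by simp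
    moreover have "l1\<^sup>2 \<le> c\<^sup>2" using that l1p by (simp add: power_mono)
    moreover have "0 \<le> (D c)\<^sup>2 * (Bfun l1 l2 (\<phi> c s))\<^sup>2" by simp
    ultimately show ?thesis unfolding X_def using zero_le_power2[of c] by linarith
  qed
  have Xhi: "sqrt (X c s) \<le> 2 * c" if "c \<ge> l1" for c s
  proof -
    have c0: "c > 0" using that l1p by simp
    have "sqrt (X c s) \<le> sqrt ((2 * c)\<^sup>2)" using Xup[OF that, of s] by (intro real_sqrt_le_mono) (simp add: power_mult_distrib)
    moreover have "sqrt ((2 * c)\<^sup>2) = 2 * c" using c0 by (simp only: real_sqrt_abs)
    ultimately show ?thesis by linarith
  qed
  have dev: "c * \<bar>c - deriv (\<phi> c) s\<bar> \<le> (D c)\<^sup>2 * l1^4 + 2 * cos (\<theta> c) * l1\<^sup>2" if "c \<ge> l1" for c s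
  proof -
    have c0: "c > 0" using that l1p by simp
    have "c * \<bar>c - deriv (\<phi> c) s\<bar> \<le> \<bar>c\<^sup>2 - X c s\<bar>"
      using sqrt_dev(2)[OF c0 Xnn[OF that]] dphi[OF c0] by simp
    also have "c\<^sup>2 - X c s = (D c)\<^sup>2 * (Bfun l1 l2 (\<phi> c s))\<^sup>2 - 2 * cos (\<theta> c) * Bfun l1 l2 (\<phi> c s)"
      unfolding X_def by simp
    also have "\<bar>\<dots>\<bar> \<le> (D c)\<^sup>2 * (Bfun l1 l2 (\<phi> c s))\<^sup>2 + 2 * cos (\<theta> c) * Bfun l1 l2 (\<phi> c s)"
      using cospos[OF c0] Bpos[of "\<phi> c s"] by (simp add: abs_le_iff)
    also have "\<dots> \<le> (D c)\<^sup>2 * l1^4 + 2 * cos (\<theta> c) * l1\<^sup>2"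
    proof -
      have "(Bfun l1 l2 (\<phi> c s))\<^sup>2 \<le> (l1\<^sup>2)\<^sup>2" using Bhi Bpos by (intro power_mono) (auto intro: less_imp_le)
      then have "(D c)\<^sup>2 * (Bfun l1 l2 (\<phi> c s))\<^sup>2 \<le> (D c)\<^sup>2 * l1^4" by (intro mult_left_mono) auto
      moreover have "cos (\<theta> c) * Bfun l1 l2 (\<phi> c s) \<le> cos (\<theta> c) * l1\<^sup>2"
        using cospos[OF c0] Bhi by (intro mult_left_mono) auto
      ultimately show ?thesis by linarith
    qed
    finally show ?thesis .
  qed
  have dev2: "\<bar>c - deriv (\<phi> c) s\<bar> \<le> 3 * l1\<^sup>2 / c" if "c \<ge> l1" for c s
  proof -
    have c0: "c > 0" using that l1p by simp
    have "(D c)\<^sup>2 \<le> (1 / c)\<^sup>2" using Dpos[OF c0] Dle[OF c0] by (intro power_mono) auto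
    then have "(D c)\<^sup>2 * l1^4 \<le> (1 / c)\<^sup>2 * l1^4" by (intro mult_right_mono) auto
    also have "\<dots> \<le> l1\<^sup>2"
    proof -
      have "l1\<^sup>2 \<le> c\<^sup>2" using that l1p by (simp add: power_mono)
      then have "l1\<^sup>2 * l1\<^sup>2 \<le> c\<^sup>2 * l1\<^sup>2" by (intro mult_right_mono) auto
      then show ?thesis using c0 by (simp add: field_simps power2_eq_square power4_eq_xxxx)
    qed
    finally have a: "(D c)\<^sup>2 * l1^4 \<le> l1\<^sup>2" .
    have b: "cos (\<theta> c) * l1\<^sup>2 \<le> 1 * l1\<^sup>2" by (intro mult_right_mono) auto
    have "c * \<bar>c - deriv (\<phi> c) s\<bar> \<le> 3 * l1\<^sup>2" using dev[OF that, of s] a b by linarith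
    then show ?thesis using c0 by (simp add: field_simps)
  qed
  define g where "g c s = (c - deriv (\<phi> c) s) / Bfun l1 l2 (\<phi> c s)" for c s
  have phic: "continuous_on UNIV (\<phi> c)" if "c > 0" for c
    using phid[OF that] by (meson DERIV_isCont continuous_at_imp_continuous_on)
  have gcont: "continuous_on UNIV (g c)" if "c > 0" for c
  proof -
    have "g c = (\<lambda>s. (c - sqrt (X c s)) / Bfun l1 l2 (\<phi> c s))" using dphi[OF that] by (auto simp: g_def)
    moreover have "continuous_on UNIV (\<lambda>s. (c - sqrt (X c s)) / Bfun l1 l2 (\<phi> c s))"
      unfolding X_def Bfun_def using phic[OF that] Bne[unfolded Bfun_def] by (intro continuous_intros) auto
    ultimately show ?thesis by simp
  qed
  have gbound: "\<bar>g c s\<bar> \<le> 3 * l1\<^sup>2 / c / l2\<^sup>2" if "c \<ge> l1" for c s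
  proof -
    have "\<bar>g c s\<bar> = \<bar>c - deriv (\<phi> c) s\<bar> / Bfun l1 l2 (\<phi> c s)" using Bpos[of "\<phi> c s"] by (simp add: g_def abs_div)
    also have "\<dots> \<le> (3 * l1\<^sup>2 / c) / l2\<^sup>2"
      using dev2[OF that, of s] Blo[of "\<phi> c s"] l2p by (intro frac_le) auto
    finally show ?thesis .
  qed
  have gform: "g c s = ((D c)\<^sup>2 * Bfun l1 l2 (\<phi> c s) - 2 * cos (\<theta> c)) / (c + sqrt (X c s))" if "c \<ge> l1" for c s
  proof -
    have c0: "c > 0" using that l1p by simp
    have "c - deriv (\<phi> c) s = (c\<^sup>2 - X c s) / (c + sqrt (X c s))"
      using sqrt_dev(1)[OF c0 Xnn[OF that]] dphi[OF c0] by simp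
    also have "c\<^sup>2 - X c s = Bfun l1 l2 (\<phi> c s) * ((D c)\<^sup>2 * Bfun l1 l2 (\<phi> c s) - 2 * cos (\<theta> c))"
      unfolding X_def by (simp add: algebra_simps power2_eq_square)
    finally show ?thesis using Bpos[of "\<phi> c s"] unfolding g_def by (simp add: field_simps)
  qed
  have cos_bound: "cos (\<theta> c) \<le> 2 * (D c)\<^sup>2 * l1\<^sup>2" if "c \<ge> l1" for c
  proof (rule ccontr)
    assume "\<not> ?thesis"
    then have big: "cos (\<theta> c) > 2 * (D c)\<^sup>2 * l1\<^sup>2" by simp
    have c0: "c > 0" using that l1p by simp
    obtain Uc where Uc: "Uc = U c" "Uc > 0" "\<phi> c Uc = pi" using U_pos[OF c0] by auto
    define N' where "N' = (D c)\<^sup>2 * l1\<^sup>2 - 2 * cos (\<theta> c)"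
    have "0 \<le> (D c)\<^sup>2 * l1\<^sup>2" by simp
    then have N'neg: "N' < 0" unfolding N'_def using big by linarith
    have gle: "g c s \<le> N' / (3 * c)" for s
    proof -
      have "(D c)\<^sup>2 * Bfun l1 l2 (\<phi> c s) \<le> (D c)\<^sup>2 * l1\<^sup>2" using Bhi by (intro mult_left_mono) auto
      then have "(D c)\<^sup>2 * Bfun l1 l2 (\<phi> c s) - 2 * cos (\<theta> c) \<le> N'" unfolding N'_def by simp
      moreover have "0 < c + sqrt (X c s)" using c0 Xnn[OF that, of s] by (simp add: add_pos_nonneg)
      moreover have "c + sqrt (X c s) \<le> 3 * c" using Xhi[OF that, of s] by simp
      ultimately show ?thesis unfolding gform[OF that] using N'neg div_le_neg by blast
    qed
    have gint: "g c integrable_on {0..Uc}"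
      by (rule integrable_continuous_interval) (rule continuous_on_subset[OF gcont[OF c0]], simp)
    have "integral {0..Uc} (g c) \<le> integral {0..Uc} (\<lambda>_. N' / (3 * c))"
      using gint by (intro integral_le) (auto intro: gle)
    also have "\<dots> = Uc * (N' / (3 * c))" using Uc by simp
    finally have ile: "integral {0..Uc} (g c) \<le> Uc * (N' / (3 * c))" .
    have Geq: "Gfun l1 l2 c (\<phi> c) Uc = integral {0..Uc} (g c)"
      using Uc unfolding Gfun_def sint_def g_def by simp
    have "c * Gfun l1 l2 c (\<phi> c) Uc \<le> c * (Uc * (N' / (3 * c)))"
      unfolding Geq using c0 ile by (intro mult_left_mono) auto
    also have "c * (Uc * (N' / (3 * c))) = Uc * N' / 3" using c0 by simp
    finally have Gle: "c * Gfun l1 l2 c (\<phi> c) Uc \<le> Uc * N' / 3" .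
    have fb: "\<bar>f c Uc - f c 0 - 0 * Uc\<bar> \<le> (D c * l1\<^sup>2) * \<bar>Uc\<bar>"
    proof (rule mvt_bound[OF fd[OF c0]])
      fix x show "\<bar>D c * Bfun l1 l2 (\<phi> c x) - 0\<bar> \<le> D c * l1\<^sup>2"
        using Dpos[OF c0] Bpos[of "\<phi> c x"] Bhi[of "\<phi> c x"] by (simp add: mult_left_mono)
    qed
    then have "f c Uc \<le> D c * l1\<^sup>2 * Uc" using f0[OF c0] Uc by simp
    then have "D c * f c Uc \<le> D c * (D c * l1\<^sup>2 * Uc)" using Dpos[OF c0] by (intro mult_left_mono) auto
    moreover have "D c * f c Uc + c * Gfun l1 l2 c (\<phi> c) Uc = 0"
      using H_zero[OF c0] Uc unfolding Hfun_def D_def by simp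
    moreover have "D c * (D c * l1\<^sup>2 * Uc) = Uc * ((D c)\<^sup>2 * l1\<^sup>2)" by (simp add: power2_eq_square)
    ultimately have "0 \<le> Uc * ((D c)\<^sup>2 * l1\<^sup>2) + Uc * N' / 3" using Gle by linarith
    also have "\<dots> = Uc * ((D c)\<^sup>2 * l1\<^sup>2 + N' / 3)" by (simp add: algebra_simps)
    finally have "0 \<le> (D c)\<^sup>2 * l1\<^sup>2 + N' / 3" using Uc by (simp add: zero_le_mult_iff)
    then show False using big unfolding N'_def by (simp add: field_simps)
  qed
  have inv0: "((\<lambda>c::real. 1 / c) \<longlongrightarrow> 0) at_top" by real_asymp
  have ln0: "((\<lambda>c::real. (2 * ln c + vt) / c\<^sup>2) \<longlongrightarrow> 0) at_top" by real_asymp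
  have evl: "eventually (\<lambda>c. c \<ge> l1) at_top" by (rule eventually_ge_at_top)
  have Dsq: "(D c)\<^sup>2 \<le> (1 / c)\<^sup>2" if "c > 0" for c
    using Dpos[OF that] Dle[OF that] by (intro power_mono) auto
  have cos0: "((\<lambda>c. cos (\<theta> c)) \<longlongrightarrow> 0) at_top"
  proof (rule tendsto_bound)
    have "((\<lambda>c. 2 * l1\<^sup>2 * (1 / c)\<^sup>2) \<longlongrightarrow> 2 * l1\<^sup>2 * 0\<^sup>2) at_top" by (intro tendsto_intros inv0)
    then show "((\<lambda>c. 2 * l1\<^sup>2 * (1 / c)\<^sup>2) \<longlongrightarrow> 0) at_top" by simp
    show "\<forall>\<^sub>F c in at_top. \<bar>cos (\<theta> c) - 0\<bar> \<le> 2 * l1\<^sup>2 * (1 / c)\<^sup>2"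
      using evl
    proof eventually_elim
      case (elim c)
      then have c0: "c > 0" using l1p by simp
      have "cos (\<theta> c) \<le> 2 * (D c)\<^sup>2 * l1\<^sup>2" by (rule cos_bound[OF elim])
      also have "\<dots> \<le> 2 * (1 / c)\<^sup>2 * l1\<^sup>2" using Dsq[OF c0] by (intro mult_right_mono) auto
      finally show ?case using cospos[OF c0] by (simp add: mult.commute mult.left_commute)
    qed
  qed
  have sin1: "((\<lambda>c. sin (\<theta> c)) \<longlongrightarrow> 1) at_top"
  proof -
    have "((\<lambda>c. sqrt (1 - (cos (\<theta> c))\<^sup>2)) \<longlongrightarrow> sqrt (1 - 0\<^sup>2)) at_top" by (intro tendsto_intros cos0)
    moreover have "eventually (\<lambda>c. sqrt (1 - (cos (\<theta> c))\<^sup>2) = sin (\<theta> c)) at_top"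
      using eventually_gt_at_top[of 0]
    proof eventually_elim
      case (elim c)
      show ?case using sinpos[OF elim] by (metis sin_squared_eq real_sqrt_abs abs_of_pos)
    qed
    ultimately show ?thesis by (simp add: tendsto_cong)
  qed
  have D0: "(D \<longlongrightarrow> 0) at_top"
  proof (rule tendsto_bound[OF _ inv0])
    show "\<forall>\<^sub>F c in at_top. \<bar>D c - 0\<bar> \<le> 1 / c"
      using eventually_gt_at_top[of 0]
    proof eventually_elim
      case (elim c) show ?case using Dpos[OF elim] Dle[OF elim] by simp
    qed
  qed
  define u where "u c = ut / c" for c :: real
  define v where "v c = (2 * ln c + vt) / c" for c :: real
  define p where "p c = \<phi> c (u c)" for c
  define dp where "dp c = deriv (\<phi> c) (u c)" for c
  define df where "df c = deriv (f c) (u c)" for c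
  define A where "A c = f c (u c) + c * v c" for c
  define x3 where "x3 c = - l1 * l2 * D c * v c + l1 * l2 * Gfun l1 l2 c (\<phi> c) (u c)" for c
  have p0: "(p \<longlongrightarrow> ut) at_top"
  proof (rule tendsto_bound)
    have "((\<lambda>c. 3 * l1\<^sup>2 * \<bar>ut\<bar> * (1 / c) * (1 / c)) \<longlongrightarrow> 3 * l1\<^sup>2 * \<bar>ut\<bar> * 0 * 0) at_top"
      by (intro tendsto_intros inv0)
    then show "((\<lambda>c. 3 * l1\<^sup>2 * \<bar>ut\<bar> * (1 / c) * (1 / c)) \<longlongrightarrow> 0) at_top" by simp
    show "\<forall>\<^sub>F c in at_top. \<bar>p c - ut\<bar> \<le> 3 * l1\<^sup>2 * \<bar>ut\<bar> * (1 / c) * (1 / c)"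
      using evl
    proof eventually_elim
      case (elim c)
      then have c0: "c > 0" using l1p by simp
      have "\<bar>\<phi> c (u c) - \<phi> c 0 - c * u c\<bar> \<le> (3 * l1\<^sup>2 / c) * \<bar>u c\<bar>"
      proof (rule mvt_bound[OF phid[OF c0]])
        fix x show "\<bar>sqrt (X c x) - c\<bar> \<le> 3 * l1\<^sup>2 / c" using dev2[OF elim, of x] dphi[OF c0, of x] by simp
      qed
      then show ?case using c0 phi0[OF c0] by (simp add: p_def u_def abs_div field_simps)
    qed
  qed
  have fu0: "((\<lambda>c. f c (u c)) \<longlongrightarrow> 0) at_top"
  proof (rule tendsto_bound)
    have "((\<lambda>c. l1\<^sup>2 * \<bar>ut\<bar> * (1 / c) * (1 / c)) \<longlongrightarrow> l1\<^sup>2 * \<bar>ut\<bar> * 0 * 0) at_top"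
      by (intro tendsto_intros inv0)
    then show "((\<lambda>c. l1\<^sup>2 * \<bar>ut\<bar> * (1 / c) * (1 / c)) \<longlongrightarrow> 0) at_top" by simp
    show "\<forall>\<^sub>F c in at_top. \<bar>f c (u c) - 0\<bar> \<le> l1\<^sup>2 * \<bar>ut\<bar> * (1 / c) * (1 / c)"
      using evl
    proof eventually_elim
      case (elim c)
      then have c0: "c > 0" using l1p by simp
      have "\<bar>f c (u c) - f c 0 - 0 * u c\<bar> \<le> (l1\<^sup>2 / c) * \<bar>u c\<bar>"
      proof (rule mvt_bound[OF fd[OF c0]])
        fix x
        have "D c * Bfun l1 l2 (\<phi> c x) \<le> (1 / c) * l1\<^sup>2"
          using Dpos[OF c0] Dle[OF c0] Bhi[of "\<phi> c x"] Bpos[of "\<phi> c x"] c0 by (intro mult_mono) auto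
        then show "\<bar>D c * Bfun l1 l2 (\<phi> c x) - 0\<bar> \<le> l1\<^sup>2 / c"
          using Dpos[OF c0] Bpos[of "\<phi> c x"] by simp
      qed
      then show ?case using c0 f0[OF c0] by (simp add: u_def abs_div field_simps)
    qed
  qed
  have G0: "((\<lambda>c. Gfun l1 l2 c (\<phi> c) (u c)) \<longlongrightarrow> 0) at_top"
  proof (rule tendsto_bound)
    have "((\<lambda>c. 3 * l1\<^sup>2 / l2\<^sup>2 * \<bar>ut\<bar> * (1 / c) * (1 / c)) \<longlongrightarrow> 3 * l1\<^sup>2 / l2\<^sup>2 * \<bar>ut\<bar> * 0 * 0) at_top"
      by (intro tendsto_intros inv0)
    then show "((\<lambda>c. 3 * l1\<^sup>2 / l2\<^sup>2 * \<bar>ut\<bar> * (1 / c) * (1 / c)) \<longlongrightarrow> 0) at_top" by simp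
    show "\<forall>\<^sub>F c in at_top. \<bar>Gfun l1 l2 c (\<phi> c) (u c) - 0\<bar> \<le> 3 * l1\<^sup>2 / l2\<^sup>2 * \<bar>ut\<bar> * (1 / c) * (1 / c)"
      using evl
    proof eventually_elim
      case (elim c)
      then have c0: "c > 0" using l1p by simp
      have "Gfun l1 l2 c (\<phi> c) (u c) = sint 0 (u c) (g c)" unfolding Gfun_def g_def[abs_def] by simp
      also have "\<bar>\<dots>\<bar> \<le> (3 * l1\<^sup>2 / c / l2\<^sup>2) * \<bar>u c\<bar>"
        by (rule sint_bound[OF gcont[OF c0] gbound[OF elim]])
      finally show ?case using c0 by (simp add: u_def abs_div field_simps)
    qed
  qed
  have Dv0: "((\<lambda>c. D c * v c) \<longlongrightarrow> 0) at_top"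
  proof -
    have "((\<lambda>c. sin (\<theta> c) * ((2 * ln c + vt) / c\<^sup>2)) \<longlongrightarrow> 1 * 0) at_top" by (intro tendsto_intros sin1 ln0)
    moreover have "eventually (\<lambda>c. sin (\<theta> c) * ((2 * ln c + vt) / c\<^sup>2) = D c * v c) at_top"
      using eventually_gt_at_top[of 0]
      by eventually_elim (simp add: D_def Dconst_def v_def power2_eq_square)
    ultimately show ?thesis by (simp add: tendsto_cong)
  qed
  have x30: "(x3 \<longlongrightarrow> 0) at_top"
  proof -
    have "((\<lambda>c. - l1 * l2 * (D c * v c) + l1 * l2 * Gfun l1 l2 c (\<phi> c) (u c)) \<longlongrightarrow> - l1 * l2 * 0 + l1 * l2 * 0) at_top"
      by (intro tendsto_intros Dv0 G0)
    then show ?thesis unfolding x3_def by (simp add: mult.assoc)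
  qed
  have Bcont: "((\<lambda>c. Bfun l1 l2 (p c)) \<longlongrightarrow> Bfun l1 l2 ut) at_top"
    unfolding Bfun_def by (intro tendsto_intros p0)
  have cdf: "((\<lambda>c. c * df c) \<longlongrightarrow> Bfun l1 l2 ut) at_top"
  proof -
    have "((\<lambda>c. sin (\<theta> c) * Bfun l1 l2 (p c)) \<longlongrightarrow> 1 * Bfun l1 l2 ut) at_top" by (intro tendsto_intros sin1 Bcont)
    moreover have "eventually (\<lambda>c. sin (\<theta> c) * Bfun l1 l2 (p c) = c * df c) at_top"
      using eventually_gt_at_top[of 0]
    proof eventually_elim
      case (elim c) show ?case using elim by (simp add: df_def dfe[OF elim] D_def Dconst_def p_def)
    qed
    ultimately show ?thesis by (simp add: tendsto_cong)
  qed
  have cdp: "((\<lambda>c. c * (c - dp c)) \<longlongrightarrow> 0) at_top"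
  proof (rule tendsto_bound)
    have "((\<lambda>c. (D c)\<^sup>2 * l1^4 + 2 * cos (\<theta> c) * l1\<^sup>2) \<longlongrightarrow> 0\<^sup>2 * l1^4 + 2 * 0 * l1\<^sup>2) at_top"
      by (intro tendsto_intros D0 cos0)
    then show "((\<lambda>c. (D c)\<^sup>2 * l1^4 + 2 * cos (\<theta> c) * l1\<^sup>2) \<longlongrightarrow> 0) at_top" by simp
    show "\<forall>\<^sub>F c in at_top. \<bar>c * (c - dp c) - 0\<bar> \<le> (D c)\<^sup>2 * l1^4 + 2 * cos (\<theta> c) * l1\<^sup>2"
      using evl
    proof eventually_elim
      case (elim c)
      then have c0: "c > 0" using l1p by simp
      show ?case using dev[OF elim, of "u c"] c0 by (simp add: dp_def abs_mult)
    qed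
  qed
  have expA: "exp (A c) = exp (f c (u c) + vt) * c\<^sup>2" "exp (- A c) = exp (- (f c (u c) + vt)) * (1 / c)\<^sup>2" if "c > 0" for c
  proof -
    have Aeq: "A c = (f c (u c) + vt) + ln c + ln c" using that by (simp add: A_def v_def field_simps)
    have "exp (ln c * 2) = exp (ln c + ln c)" by simp
    also have "\<dots> = c * c" using that by (simp only: exp_add exp_ln)
    finally have e2: "exp (ln c * 2) = c * c" .
    then show "exp (A c) = exp (f c (u c) + vt) * c\<^sup>2" "exp (- A c) = exp (- (f c (u c) + vt)) * (1 / c)\<^sup>2"
      using that e2 unfolding Aeq by (simp_all add: exp_add exp_diff power2_eq_square exp_minus field_simps)
  qed
  have ch: "((\<lambda>c. cosh (A c) / c\<^sup>2) \<longlongrightarrow> exp vt / 2) at_top"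
  proof -
    have "((\<lambda>c. (exp (f c (u c) + vt) + exp (- (f c (u c) + vt)) * ((1 / c)\<^sup>2)\<^sup>2) / 2) \<longlongrightarrow>
       (exp (0 + vt) + exp (- (0 + vt)) * (0\<^sup>2)\<^sup>2) / 2) at_top" by (intro tendsto_intros fu0 inv0) auto
    moreover have "eventually (\<lambda>c. (exp (f c (u c) + vt) + exp (- (f c (u c) + vt)) * ((1 / c)\<^sup>2)\<^sup>2) / 2 = cosh (A c) / c\<^sup>2) at_top"
      using eventually_gt_at_top[of 0]
    proof eventually_elim
      case (elim c) show ?case unfolding cosh_def using expA[OF elim] elim by (simp add: field_simps power2_eq_square)
    qed
    ultimately have "((\<lambda>c. cosh (A c) / c\<^sup>2) \<longlongrightarrow> (exp (0 + vt) + exp (- (0 + vt)) * (0\<^sup>2)\<^sup>2) / 2) at_top" by (rule Lim_transform_eventually)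
    then show ?thesis by simp
  qed
  have sh: "((\<lambda>c. sinh (A c) / c\<^sup>2) \<longlongrightarrow> exp vt / 2) at_top"
  proof -
    have "((\<lambda>c. (exp (f c (u c) + vt) - exp (- (f c (u c) + vt)) * ((1 / c)\<^sup>2)\<^sup>2) / 2) \<longlongrightarrow>
       (exp (0 + vt) - exp (- (0 + vt)) * (0\<^sup>2)\<^sup>2) / 2) at_top" by (intro tendsto_intros fu0 inv0) auto
    moreover have "eventually (\<lambda>c. (exp (f c (u c) + vt) - exp (- (f c (u c) + vt)) * ((1 / c)\<^sup>2)\<^sup>2) / 2 = sinh (A c) / c\<^sup>2) at_top"
      using eventually_gt_at_top[of 0]
    proof eventually_elim
      case (elim c) show ?case unfolding sinh_def using expA[OF elim] elim by (simp add: field_simps power2_eq_square)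
    qed
    ultimately have "((\<lambda>c. sinh (A c) / c\<^sup>2) \<longlongrightarrow> (exp (0 + vt) - exp (- (0 + vt)) * (0\<^sup>2)\<^sup>2) / 2) at_top" by (rule Lim_transform_eventually)
    then show ?thesis by simp
  qed
  define M1 where "M1 c = c * cos (x3 c) * cosh (A c) - l1 * l2 * D c * sin (x3 c) * sinh (A c)" for c
  define M2 where "M2 c = c * cos (x3 c) * sinh (A c) - l1 * l2 * D c * sin (x3 c) * cosh (A c)" for c
  define M3 where "M3 c = c * sin (x3 c) * sinh (A c) + l1 * l2 * D c * cos (x3 c) * cosh (A c)" for c
  define M4 where "M4 c = c * sin (x3 c) * cosh (A c) + l1 * l2 * D c * cos (x3 c) * sinh (A c)" for c
  define K where "K c = - 1 / ((c\<^sup>2 + l1\<^sup>2 * l2\<^sup>2 * (D c)\<^sup>2) * Bfun l1 l2 (p c))" for c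
  define x1 where "x1 c = K c * (1 / l1 * df c * cos (p c) * M1 c - 1 / l1 * (c - dp c) * sin (p c) * M2 c
                   - 1 / l2 * (c - dp c) * cos (p c) * M3 c - 1 / l2 * df c * sin (p c) * M4 c)" for c
  define x2 where "x2 c = K c * (1 / l1 * df c * cos (p c) * M4 c - 1 / l1 * (c - dp c) * sin (p c) * M3 c
                   + 1 / l2 * (c - dp c) * cos (p c) * M2 c + 1 / l2 * df c * sin (p c) * M1 c)" for c
  have catX_eq: "catX l1 l2 c (\<theta> c) (\<phi> c) (f c) (ut / c) ((2 * ln c + vt) / c) = (x1 c, x2 c, x3 c)" for c
    unfolding catX_def Let_def x1_def x2_def x3_def M1_def M2_def M3_def M4_def K_def A_def p_def
      dp_def df_def u_def v_def D_def by simp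
  have Kc2: "((\<lambda>c. K c * c\<^sup>2) \<longlongrightarrow> - 1 / Bfun l1 l2 ut) at_top"
  proof -
    have "((\<lambda>c. - 1 / ((1 + l1\<^sup>2 * l2\<^sup>2 * (D c)\<^sup>2 * (1 / c)\<^sup>2) * Bfun l1 l2 (p c))) \<longlongrightarrow>
        - 1 / ((1 + l1\<^sup>2 * l2\<^sup>2 * 0\<^sup>2 * 0\<^sup>2) * Bfun l1 l2 ut)) at_top"
      by (intro tendsto_intros D0 inv0 Bcont) (simp add: Bne)
    moreover have "eventually (\<lambda>c. - 1 / ((1 + l1\<^sup>2 * l2\<^sup>2 * (D c)\<^sup>2 * (1 / c)\<^sup>2) * Bfun l1 l2 (p c)) = K c * c\<^sup>2) at_top"
      using eventually_gt_at_top[of 0]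
    proof eventually_elim
      case (elim c)
      have "0 < (c\<^sup>2 + l1\<^sup>2 * l2\<^sup>2 * (D c)\<^sup>2)" using elim by (simp add: add_pos_nonneg)
      then show ?case unfolding K_def using elim Bpos[of "p c"] by (simp add: field_simps power2_eq_square)
    qed
    ultimately have "((\<lambda>c. K c * c\<^sup>2) \<longlongrightarrow> - 1 / ((1 + l1\<^sup>2 * l2\<^sup>2 * 0\<^sup>2 * 0\<^sup>2) * Bfun l1 l2 ut)) at_top"
      by (rule Lim_transform_eventually)
    then show ?thesis by simp
  qed
  have m1: "((\<lambda>c. M1 c / c ^ 3) \<longlongrightarrow> exp vt / 2) at_top"
  proof -
    have "((\<lambda>c. cos (x3 c) * (cosh (A c) / c\<^sup>2) - l1 * l2 * (D c * (1 / c)) * sin (x3 c) * (sinh (A c) / c\<^sup>2)) \<longlongrightarrow>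
       cos 0 * (exp vt / 2) - l1 * l2 * (0 * 0) * sin 0 * (exp vt / 2)) at_top"
      by (intro tendsto_intros x30 ch sh D0 inv0)
    moreover have "eventually (\<lambda>c. cos (x3 c) * (cosh (A c) / c\<^sup>2) - l1 * l2 * (D c * (1 / c)) * sin (x3 c) * (sinh (A c) / c\<^sup>2) = M1 c / c ^ 3) at_top"
      using eventually_gt_at_top[of 0]
      by eventually_elim (simp add: M1_def field_simps power2_eq_square power3_eq_cube)
    ultimately have "((\<lambda>c. M1 c / c ^ 3) \<longlongrightarrow> cos 0 * (exp vt / 2) - l1 * l2 * (0 * 0) * sin 0 * (exp vt / 2)) at_top"
      by (rule Lim_transform_eventually)
    then show ?thesis by simp
  qed
  have m2: "((\<lambda>c. M2 c / c ^ 3) \<longlongrightarrow> exp vt / 2) at_top"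
  proof -
    have "((\<lambda>c. cos (x3 c) * (sinh (A c) / c\<^sup>2) - l1 * l2 * (D c * (1 / c)) * sin (x3 c) * (cosh (A c) / c\<^sup>2)) \<longlongrightarrow>
       cos 0 * (exp vt / 2) - l1 * l2 * (0 * 0) * sin 0 * (exp vt / 2)) at_top"
      by (intro tendsto_intros x30 ch sh D0 inv0)
    moreover have "eventually (\<lambda>c. cos (x3 c) * (sinh (A c) / c\<^sup>2) - l1 * l2 * (D c * (1 / c)) * sin (x3 c) * (cosh (A c) / c\<^sup>2) = M2 c / c ^ 3) at_top"
      using eventually_gt_at_top[of 0]
      by eventually_elim (simp add: M2_def field_simps power2_eq_square power3_eq_cube)
    ultimately have "((\<lambda>c. M2 c / c ^ 3) \<longlongrightarrow> cos 0 * (exp vt / 2) - l1 * l2 * (0 * 0) * sin 0 * (exp vt / 2)) at_top"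
      by (rule Lim_transform_eventually)
    then show ?thesis by simp
  qed
  have m3: "((\<lambda>c. M3 c / c ^ 3) \<longlongrightarrow> 0) at_top"
  proof -
    have "((\<lambda>c. sin (x3 c) * (sinh (A c) / c\<^sup>2) + l1 * l2 * (D c * (1 / c)) * cos (x3 c) * (cosh (A c) / c\<^sup>2)) \<longlongrightarrow>
       sin 0 * (exp vt / 2) + l1 * l2 * (0 * 0) * cos 0 * (exp vt / 2)) at_top"
      by (intro tendsto_intros x30 ch sh D0 inv0)
    moreover have "eventually (\<lambda>c. sin (x3 c) * (sinh (A c) / c\<^sup>2) + l1 * l2 * (D c * (1 / c)) * cos (x3 c) * (cosh (A c) / c\<^sup>2) = M3 c / c ^ 3) at_top"
      using eventually_gt_at_top[of 0]
      by eventually_elim (simp add: M3_def field_simps power2_eq_square power3_eq_cube)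
    ultimately have "((\<lambda>c. M3 c / c ^ 3) \<longlongrightarrow> sin 0 * (exp vt / 2) + l1 * l2 * (0 * 0) * cos 0 * (exp vt / 2)) at_top"
      by (rule Lim_transform_eventually)
    then show ?thesis by simp
  qed
  have m4: "((\<lambda>c. M4 c / c ^ 3) \<longlongrightarrow> 0) at_top"
  proof -
    have "((\<lambda>c. sin (x3 c) * (cosh (A c) / c\<^sup>2) + l1 * l2 * (D c * (1 / c)) * cos (x3 c) * (sinh (A c) / c\<^sup>2)) \<longlongrightarrow>
       sin 0 * (exp vt / 2) + l1 * l2 * (0 * 0) * cos 0 * (exp vt / 2)) at_top"
      by (intro tendsto_intros x30 ch sh D0 inv0)
    moreover have "eventually (\<lambda>c. sin (x3 c) * (cosh (A c) / c\<^sup>2) + l1 * l2 * (D c * (1 / c)) * cos (x3 c) * (sinh (A c) / c\<^sup>2) = M4 c / c ^ 3) at_top"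
      using eventually_gt_at_top[of 0]
      by eventually_elim (simp add: M4_def field_simps power2_eq_square power3_eq_cube)
    ultimately have "((\<lambda>c. M4 c / c ^ 3) \<longlongrightarrow> sin 0 * (exp vt / 2) + l1 * l2 * (0 * 0) * cos 0 * (exp vt / 2)) at_top"
      by (rule Lim_transform_eventually)
    then show ?thesis by simp
  qed
  have X1: "(x1 \<longlongrightarrow> - 1 / (2 * l1) * cos ut * exp vt) at_top"
  proof -
    let ?L = "(- 1 / Bfun l1 l2 ut) * (1 / l1 * Bfun l1 l2 ut * cos ut * (exp vt / 2) - 1 / l1 * 0 * sin ut * (exp vt / 2)
                   - 1 / l2 * 0 * cos ut * 0 - 1 / l2 * Bfun l1 l2 ut * sin ut * 0)"
    have "((\<lambda>c. (K c * c\<^sup>2) * (1 / l1 * (c * df c) * cos (p c) * (M1 c / c ^ 3) - 1 / l1 * (c * (c - dp c)) * sin (p c) * (M2 c / c ^ 3)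
                   - 1 / l2 * (c * (c - dp c)) * cos (p c) * (M3 c / c ^ 3) - 1 / l2 * (c * df c) * sin (p c) * (M4 c / c ^ 3))) \<longlongrightarrow> ?L) at_top"
      by (intro tendsto_intros Kc2 cdf cdp p0 m1 m2 m3 m4)
    moreover have "eventually (\<lambda>c. (K c * c\<^sup>2) * (1 / l1 * (c * df c) * cos (p c) * (M1 c / c ^ 3) - 1 / l1 * (c * (c - dp c)) * sin (p c) * (M2 c / c ^ 3)
                   - 1 / l2 * (c * (c - dp c)) * cos (p c) * (M3 c / c ^ 3) - 1 / l2 * (c * df c) * sin (p c) * (M4 c / c ^ 3)) = x1 c) at_top"
      using eventually_gt_at_top[of 0]
      by eventually_elim (use l1p l2p in \<open>simp add: x1_def field_simps power2_eq_square power3_eq_cube\<close>)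
    ultimately have "(x1 \<longlongrightarrow> ?L) at_top" by (rule Lim_transform_eventually)
    moreover have "?L = - 1 / (2 * l1) * cos ut * exp vt" using Bne[of ut] l1p by (simp add: field_simps)
    ultimately show ?thesis by simp
  qed
  have X2: "(x2 \<longlongrightarrow> - 1 / (2 * l2) * sin ut * exp vt) at_top"
  proof -
    let ?L = "(- 1 / Bfun l1 l2 ut) * (1 / l1 * Bfun l1 l2 ut * cos ut * 0 - 1 / l1 * 0 * sin ut * 0
                   + 1 / l2 * 0 * cos ut * (exp vt / 2) + 1 / l2 * Bfun l1 l2 ut * sin ut * (exp vt / 2))"
    have "((\<lambda>c. (K c * c\<^sup>2) * (1 / l1 * (c * df c) * cos (p c) * (M4 c / c ^ 3) - 1 / l1 * (c * (c - dp c)) * sin (p c) * (M3 c / c ^ 3)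
                   + 1 / l2 * (c * (c - dp c)) * cos (p c) * (M2 c / c ^ 3) + 1 / l2 * (c * df c) * sin (p c) * (M1 c / c ^ 3))) \<longlongrightarrow> ?L) at_top"
      by (intro tendsto_intros Kc2 cdf cdp p0 m1 m2 m3 m4)
    moreover have "eventually (\<lambda>c. (K c * c\<^sup>2) * (1 / l1 * (c * df c) * cos (p c) * (M4 c / c ^ 3) - 1 / l1 * (c * (c - dp c)) * sin (p c) * (M3 c / c ^ 3)
                   + 1 / l2 * (c * (c - dp c)) * cos (p c) * (M2 c / c ^ 3) + 1 / l2 * (c * df c) * sin (p c) * (M1 c / c ^ 3)) = x2 c) at_top"
      using eventually_gt_at_top[of 0]
      by eventually_elim (use l1p l2p in \<open>simp add: x2_def field_simps power2_eq_square power3_eq_cube\<close>)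
    ultimately have "(x2 \<longlongrightarrow> ?L) at_top" by (rule Lim_transform_eventually)
    moreover have "?L = - 1 / (2 * l2) * sin ut * exp vt" using Bne[of ut] l2p by (simp add: field_simps)
    ultimately show ?thesis by simp
  qed
  have "((\<lambda>c. (x1 c, x2 c, x3 c)) \<longlongrightarrow> (- 1 / (2 * l1) * cos ut * exp vt, - 1 / (2 * l2) * sin ut * exp vt, 0)) at_top"
    by (intro tendsto_Pair X1 X2 x30)
  then show ?thesis unfolding catX_eq .
qed

end
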